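(* Let $\lambda\in\mathbb{C}^*$, $\alpha\in\mathbb{C}$, $t\in\{1,-1\}$, and let $\mathcal{M}_t(\lambda,\alpha)$ be the $\mathcal{T}$-module described in the context. Let $\Upsilon_t=\partial^2\mathbb{C}[\partial^2]\oplus\partial\mathbb{C}[\partial^2]\subseteq\mathcal{M}_t(\lambda,0)$. Then: (1) $\mathcal{M}_t(\lambda,\alpha)$ is simple if and only if $\alpha\neq0$. Furthermore, $\Upsilon_t$ is the unique nonzero proper submodule of $\mathcal{M}_t(\lambda,0)$, and $\mathcal{M}_t(\lambda,0)/\Upsilon_t$ is a one-dimensional trivial $\mathcal{T}$-module. (2) $\Upsilon_1\cong\Pi(\mathcal{M}_{-1}(\lambda,\frac12))$ and $\Upsilon_{-1}\cong\Pi(\mathcal{M}_1(\lambda,\frac12))$, and these are simple $\mathcal{T}$-modules.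
   Context: The twisted $N=2$ superconformal algebra $\mathcal{T}$ is the Lie superalgebra over $\mathbb{C}$ with basis $\{L_m, I_r, G_p\mid m\in\mathbb{Z}, r\in\frac12+\mathbb{Z}, p\in\frac12\mathbb{Z}\}$, even part spanned by the $L_m,I_r$, odd part spanned by the $G_p$, and with the only nonzero brackets $[L_m,L_n]=(m-n)L_{m+n}$, $[L_m,I_r]=-rI_{m+r}$, $[L_m,G_p]=(\frac m2-p)G_{m+p}$, $[I_r,G_p]=G_{r+p}$, and $[G_p,G_q]=(-1)^{2p}2L_{p+q}$ if $p+q\in\mathbb{Z}$, $[G_p,G_q]=(-1)^{2p+1}(p-q)I_{p+q}$ if $p+q\in\frac12+\mathbb{Z}$. Modules are $\mathbb{Z}_2$-graded (super)modules; $\Pi$ denotes the parity-change functor (swapping even and odd parts). For $\lambda\in\mathbb{C}^*,\alpha\in\mathbb{C},t=\pm1$, $\mathcal{M}_t(\lambda,\alpha)$ is the space $\mathbb{C}[\partial^2]\oplus\partial\mathbb{C}[\partial^2]$ ($\partial$ a formal variable) with even part $\mathbb{C}[\partial^2]$, odd part $\partial\mathbb{C}[\partial^2]$, and action ($m\in\mathbb{Z}$, $r\in\frac12+\mathbb{Z}$, $p\in\frac12\mathbb{Z}$): $L_mf(\partial^2)=\lambda^m(\partial^2+m\alpha)f(\partial^2+m)$, $L_m\partial f(\partial^2)=\lambda^m(\partial^2+m(\alpha+\frac12))\partial f(\partial^2+m)$, $I_rf(\partial^2)=-2t^{2r}\lambda^{r}\alpha f(\partial^2+r)$, $I_r\partial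 f(\partial^2)=t^{2r}\lambda^{r}(1-2\alpha)\partial f(\partial^2+r)$, $G_pf(\partial^2)=t^{2p}\lambda^p\partial f(\partial^2+p)$, $G_p\partial f(\partial^2)=(-t)^{2p}\lambda^p(\partial^2+2p\alpha)f(\partial^2+p)$. For $p\in\frac12\mathbb{Z}$, $\lambda^p$ means $(\lambda^{1/2})^{2p}$ for a fixed square root $\lambda^{1/2}$. *)

theory Defs
  imports Complex_Main "HOL-Computational_Algebra.Polynomial"
begin

text \<open>Basis elements of the twisted N=2 superconformal algebra T.
  L m  stands for L_m        (m an integer),
  I k  stands for I_{k+1/2}  (k an integer; so r = k + 1/2 ranges over 1/2 + Z),
  G n  stands for G_{n/2}    (n an integer; so p = n/2 ranges over (1/2)Z).\<close>
datatype gen = L int | I int | G int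

text \<open>Vectors of M_t(lambda,alpha) = C[d^2] + d C[d^2]: a pair (f,g) of polynomials in
  x = d^2 represents f(d^2) + d g(d^2); the even part is {(f,0)}, the odd part {(0,g)}.\<close>
type_synonym vec = "complex poly \<times> complex poly"

definition vadd :: "vec \<Rightarrow> vec \<Rightarrow> vec" where
  "vadd v w = (fst v + fst w, snd v + snd w)"

definition vsmult :: "complex \<Rightarrow> vec \<Rightarrow> vec" where
  "vsmult c v = (smult c (fst v), smult c (snd v))"

definition vzero :: vec where "vzero = (0, 0)"

definition shift :: "complex \<Rightarrow> complex poly \<Rightarrow> complex poly" where
  "shift c f = pcompose f [:c, 1:]"

text \<open>The action of the basis elements on M_t(lambda, alpha), where lambda = mu^2 and mu is the
  fixed square root lambda^{1/2}; lambda^p = mu^(2p) for p in (1/2)Z.\<close>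
fun Mact :: "complex \<Rightarrow> complex \<Rightarrow> complex \<Rightarrow> gen \<Rightarrow> vec \<Rightarrow> vec" where
  "Mact t \<mu> \<alpha> (L m) (f, g) =
     (smult (\<mu> powi (2 * m)) ([:of_int m * \<alpha>, 1:] * shift (of_int m) f),
      smult (\<mu> powi (2 * m)) ([:of_int m * (\<alpha> + 1/2), 1:] * shift (of_int m) g))"
| "Mact t \<mu> \<alpha> (I k) (f, g) =
     (smult (- 2 * t powi (2 * k + 1) * \<mu> powi (2 * k + 1) * \<alpha>) (shift (of_int k + 1/2) f),
      smult (t powi (2 * k + 1) * \<mu> powi (2 * k + 1) * (1 - 2 * \<alpha>)) (shift (of_int k + 1/2) g))"
| "Mact t \<mu> \<alpha> (G n) (f, g) =
     (smult ((- t) powi n * \<mu> powi n) ([:of_int n * \<alpha>, 1:] * shift (of_int n / 2) g),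
      smult (t powi n * \<mu> powi n) (shift (of_int n / 2) f))"

definition is_submod :: "(gen \<Rightarrow> vec \<Rightarrow> vec) \<Rightarrow> vec set \<Rightarrow> bool" where
  "is_submod act W \<longleftrightarrow>
     vzero \<in> W \<and>
     (\<forall>v\<in>W. \<forall>w\<in>W. vadd v w \<in> W) \<and>
     (\<forall>c. \<forall>v\<in>W. vsmult c v \<in> W) \<and>
     (\<forall>v\<in>W. (fst v, 0) \<in> W \<and> (0, snd v) \<in> W) \<and>
     (\<forall>X. \<forall>v\<in>W. act X v \<in> W)"

definition simple_on :: "(gen \<Rightarrow> vec \<Rightarrow> vec) \<Rightarrow> vec set \<Rightarrow> bool" where
  "simple_on act V \<longleftrightarrow> is_submod act V \<and> V \<noteq> {vzero} \<and>
     (\<forall>W. W \<subseteq> V \<and> is_submod act W \<longrightarrow> W = {vzero} \<or> W = V)"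

definition simple_mod :: "(gen \<Rightarrow> vec \<Rightarrow> vec) \<Rightarrow> bool" where
  "simple_mod act \<longleftrightarrow> simple_on act UNIV"

text \<open>Upsilon = d^2 C[d^2] + d C[d^2] (inside M_t(lambda,0)).\<close>
definition Ups :: "vec set" where
  "Ups = {(f, g). [:0, 1:] dvd f}"

definition iso_to_Pi :: "(gen \<Rightarrow> vec \<Rightarrow> vec) \<Rightarrow> vec set \<Rightarrow> (gen \<Rightarrow> vec \<Rightarrow> vec) \<Rightarrow> (vec \<Rightarrow> vec) \<Rightarrow> bool" where
  "iso_to_Pi act1 V act2 \<phi> \<longleftrightarrow>
     bij_betw \<phi> V UNIV \<and>
     (\<forall>v\<in>V. \<forall>w\<in>V. \<phi> (vadd v w) = vadd (\<phi> v) (\<phi> w)) \<and>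
     (\<forall>c. \<forall>v\<in>V. \<phi> (vsmult c v) = vsmult c (\<phi> v)) \<and>
     (\<forall>f. (f, 0) \<in> V \<longrightarrow> fst (\<phi> (f, 0)) = 0) \<and>
     (\<forall>g. (0, g) \<in> V \<longrightarrow> snd (\<phi> (0, g)) = 0) \<and>
     (\<forall>X. \<forall>v\<in>V. \<phi> (act1 X v) = act2 X (\<phi> v))"

end

theory Submission
  imports Defs
begin

lemma shift_0[simp]: "shift c 0 = 0" by (simp add: shift_def)
lemma shift_zero[simp]: "shift 0 f = f" by (simp add: shift_def)
lemma shift_add: "shift c (p + q) = shift c p + shift c q" by (simp add: shift_def pcompose_add)
lemma shift_diff: "shift c (p - q) = shift c p - shift c q" by (simp add: shift_def pcompose_diff)
lemma shift_smult: "shift c (smult a p) = smult a (shift c p)" by (simp add: shift_def pcompose_smult)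
lemma shift_mult: "shift c (p * q) = shift c p * shift c q" by (simp add: shift_def pcompose_mult)
lemma shift_x[simp]: "shift c [:0,1:] = [:c,1:]" by (simp add: shift_def pcompose_pCons)
lemma poly_shift: "poly (shift c f) x = poly f (x + c)" by (simp add: shift_def poly_pcompose add.commute)
lemma degree_shift[simp]: "degree (shift c f) = degree f" by (simp add: shift_def degree_pcompose)
lemma lead_shift: "lead_coeff (shift c f) = lead_coeff f"
  by (simp add: shift_def lead_coeff_comp)

lemma shift_ne:
  assumes "c \<noteq> 0" "degree f > 0" shows "shift c f \<noteq> f"
proof
  assume eq: "shift c f = f"
  have "\<forall>x. poly f (x + c) = poly f x" using eq by (metis poly_shift)
  hence n: "poly f (of_nat n * c) = poly f 0" for n
  proof (induction n)
    case (Suc n)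
    have "of_nat (Suc n) * c = of_nat n * c + c" by (simp add: algebra_simps)
    thus ?case using Suc \<open>\<forall>x. poly f (x + c) = poly f x\<close> by metis
  qed simp
  let ?q = "f - [:poly f 0:]"
  have "range (\<lambda>n::nat. of_nat n * c) \<subseteq> {x. poly ?q x = 0}" using n by auto
  moreover have "infinite (range (\<lambda>n::nat. of_nat n * c))"
    using assms(1) by (intro range_inj_infinite) (auto simp: inj_def)
  ultimately have "infinite {x. poly ?q x = 0}" using finite_subset by blast
  hence "?q = 0" using poly_roots_finite by blast
  hence "f = [:poly f 0:]" by simp
  hence "degree f = 0" by (metis degree_pCons_0)
  thus False using assms by simp
qed

lemma degree_shift_diff:
  assumes "degree f > 0" shows "degree (shift c f - f) < degree f"
proof -
  have le: "degree (shift c f - f) \<le> degree f" using degree_diff_le[of "shift c f" "degree f" f] by simp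
  have "coeff (shift c f - f) (degree f) = 0" using lead_shift[of c f] by simp
  show ?thesis
  proof (cases "shift c f - f = 0")
    case True thus ?thesis using assms by simp
  next
    case False
    hence "coeff (shift c f - f) (degree (shift c f - f)) \<noteq> 0" using leading_coeff_0_iff by blast
    hence "degree (shift c f - f) \<noteq> degree f" using \<open>coeff (shift c f - f) (degree f) = 0\<close> by metis
    thus ?thesis using le by simp
  qed
qed

lemma key_poly:
  fixes S :: "complex poly set"
  assumes add: "\<And>a b. a \<in> S \<Longrightarrow> b \<in> S \<Longrightarrow> a + b \<in> S"
    and sm: "\<And>c a. a \<in> S \<Longrightarrow> smult c a \<in> S"
    and sh: "\<And>a. a \<in> S \<Longrightarrow> shift (1/2) a \<in> S"
    and mx: "\<And>a. a \<in> S \<Longrightarrow> [:0,1:] * a \<in> S"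
    and f: "f \<in> S" "f \<noteq> 0"
  shows "S = UNIV"
proof -
  have "\<exists>c. c \<noteq> 0 \<and> [:c:] \<in> S" if "f \<in> S" "f \<noteq> 0" for f
    using that
  proof (induction "degree f" arbitrary: f rule: less_induct)
    case less
    show ?case
    proof (cases "degree f = 0")
      case True
      then obtain c where "f = [:c:]" by (metis degree_eq_zeroE)
      with less.prems show ?thesis by auto
    next
      case False
      let ?g = "shift (1/2) f + smult (-1) f"
      have g: "?g = shift (1/2) f - f" by simp
      have "?g \<in> S" using less.prems by (intro add sm sh)
      moreover have "?g \<noteq> 0" using shift_ne[of "1/2" f] False by simp
      moreover have "degree ?g < degree f" unfolding g using False degree_shift_diff by simp
      ultimately show ?thesis using less.hyps by blast
    qed
  qed
  then obtain c where c: "c \<noteq> 0" "[:c:] \<in> S" using f by blast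
  have one: "1 \<in> S" using sm[OF c(2), of "1/c"] c(1) by (simp add: one_pCons)
  have "p \<in> S" for p
  proof (induction p)
    case 0
    show ?case using sm[OF one, of 0] by simp
  next
    case (pCons a p)
    have "pCons a p = smult a 1 + [:0,1:] * p" by (simp add: one_pCons)
    thus ?case using add sm one mx pCons by metis
  qed
  thus ?thesis by auto
qed

lemma Mact_L0[simp]: "Mact t \<mu> \<alpha> (L 0) (f, g) = ([:0,1:] * f, [:0,1:] * g)" by simp
lemma Mact_G0[simp]: "Mact t \<mu> \<alpha> (G 0) (f, g) = ([:0,1:] * g, f)" by simp
lemma Mact_I0[simp]: "Mact t \<mu> \<alpha> (I 0) (f, g) =
   (smult (- 2 * t * \<mu> * \<alpha>) (shift (1/2) f), smult (t * \<mu> * (1 - 2 * \<alpha>)) (shift (1/2) g))"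
  by simp

lemma vadd_simp[simp]: "vadd (a, b) (c, d) = (a + c, b + d)" by (simp add: vadd_def)
lemma vsmult_simp[simp]: "vsmult c (a, b) = (smult c a, smult c b)" by (simp add: vsmult_def)

lemma simple_alpha:
  assumes "t \<noteq> 0" "\<mu> \<noteq> 0" "\<alpha> \<noteq> 0"
  shows "simple_mod (Mact t \<mu> \<alpha>)"
  unfolding simple_mod_def simple_on_def
proof (intro conjI allI impI)
  show "is_submod (Mact t \<mu> \<alpha>) UNIV" by (simp add: is_submod_def)
  show "UNIV \<noteq> {vzero}"
  proof -
    have "((1::complex poly), (0::complex poly)) \<noteq> vzero" by (simp add: vzero_def)
    thus ?thesis by auto
  qed
  fix W assume "W \<subseteq> UNIV \<and> is_submod (Mact t \<mu> \<alpha>) W"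
  hence H: "vzero \<in> W" "\<And>v w. v \<in> W \<Longrightarrow> w \<in> W \<Longrightarrow> vadd v w \<in> W"
    "\<And>c v. v \<in> W \<Longrightarrow> vsmult c v \<in> W"
    "\<And>f g. (f, g) \<in> W \<Longrightarrow> (f, 0) \<in> W" "\<And>f g. (f, g) \<in> W \<Longrightarrow> (0, g) \<in> W"
    "\<And>X v. v \<in> W \<Longrightarrow> Mact t \<mu> \<alpha> X v \<in> W"
    unfolding is_submod_def by force+
  show "W = {vzero} \<or> W = UNIV"
  proof (cases "W = {vzero}")
    case True thus ?thesis by simp
  next
    case False
    then obtain f g where fg: "(f, g) \<in> W" "(f, g) \<noteq> vzero" using H(1) False by auto
    let ?P = "{a. (a, 0) \<in> W}"
    have P: "?P = UNIV"
    proof (rule key_poly)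
      show "a + b \<in> ?P" if "a \<in> ?P" "b \<in> ?P" for a b using H(2)[of "(a,0)" "(b,0)"] that by simp
      show "smult c a \<in> ?P" if "a \<in> ?P" for c a using H(3)[of "(a,0)" c] that by simp
      show "[:0,1:] * a \<in> ?P" if "a \<in> ?P" for a using H(6)[of "(a,0)" "L 0"] that by simp
      show "shift (1/2) a \<in> ?P" if "a \<in> ?P" for a
      proof -
        let ?k = "- 2 * t * \<mu> * \<alpha>"
        have "?k \<noteq> 0" using assms by simp
        have "(smult ?k (shift (1/2) a), 0) \<in> W" using H(6)[of "(a,0)" "I 0"] that by simp
        from H(3)[OF this, of "1/ ?k"] show ?thesis using \<open>?k \<noteq> 0\<close> by simp
      qed
      show "(if f \<noteq> 0 then f else [:0,1:] * g) \<in> ?P"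
        using H(4)[OF fg(1)] H(6)[OF H(5)[OF fg(1)], of "G 0"] by simp
      show "(if f \<noteq> 0 then f else [:0,1:] * g) \<noteq> 0" using fg(2) by (auto simp: vzero_def)
    qed
    have "(a, b) \<in> W" for a b :: "complex poly"
    proof -
      have "(a, 0) \<in> W" "(b, 0) \<in> W" using P by auto
      hence "(0, b) \<in> W" using H(6)[of "(b,0)" "G 0"] by simp
      from H(2)[OF \<open>(a,0) \<in> W\<close> this] show "(a, b) \<in> W" by simp
    qed
    hence "W = UNIV" by auto
    thus ?thesis by simp
  qed
qed

lemma Ups_iff: "(f, g) \<in> Ups \<longleftrightarrow> coeff f 0 = 0"
proof -
  have "[:0,1:] dvd f \<longleftrightarrow> poly f 0 = 0" using poly_eq_0_iff_dvd[of f 0] by simp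
  thus ?thesis by (simp add: Ups_def poly_0_coeff_0)
qed

lemma x_dvd_pCons0[simp]: "[:0,1:] dvd pCons 0 p"
proof -
  have "pCons 0 p = [:0,1:] * p" by simp
  thus ?thesis by (rule dvdI)
qed

lemma Mact0_Ups: "Mact t \<mu> 0 X w \<in> Ups"
  by (cases X; cases w) (auto simp: Ups_def intro: dvd_smult)

lemma Ups_submod: "is_submod (Mact t \<mu> 0) Ups"
  unfolding is_submod_def
  by (auto simp: Mact0_Ups vzero_def vadd_def vsmult_def Ups_iff)

lemma Ups_sub:
  assumes "t \<noteq> 0" "\<mu> \<noteq> 0" "is_submod (Mact t \<mu> 0) W" "W \<noteq> {vzero}"
  shows "Ups \<subseteq> W"
proof -
  have H: "vzero \<in> W" "\<And>v w. v \<in> W \<Longrightarrow> w \<in> W \<Longrightarrow> vadd v w \<in> W"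
    "\<And>c v. v \<in> W \<Longrightarrow> vsmult c v \<in> W"
    "\<And>f g. (f, g) \<in> W \<Longrightarrow> (f, 0) \<in> W" "\<And>f g. (f, g) \<in> W \<Longrightarrow> (0, g) \<in> W"
    "\<And>X v. v \<in> W \<Longrightarrow> Mact t \<mu> 0 X v \<in> W"
    using assms(3) unfolding is_submod_def by force+
  obtain f g where fg: "(f, g) \<in> W" "(f, g) \<noteq> vzero" using H(1) assms(4) by auto
  let ?Q = "{a. (0, a) \<in> W}"
  have Q: "?Q = UNIV"
  proof (rule key_poly)
    show "a + b \<in> ?Q" if "a \<in> ?Q" "b \<in> ?Q" for a b using H(2)[of "(0,a)" "(0,b)"] that by simp
    show "smult c a \<in> ?Q" if "a \<in> ?Q" for c a using H(3)[of "(0,a)" c] that by simp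
    show "[:0,1:] * a \<in> ?Q" if "a \<in> ?Q" for a using H(6)[of "(0,a)" "L 0"] that by simp
    show "shift (1/2) a \<in> ?Q" if "a \<in> ?Q" for a
    proof -
      let ?k = "t * \<mu>"
      have "?k \<noteq> 0" using assms by simp
      have "(0, smult ?k (shift (1/2) a)) \<in> W" using H(6)[of "(0,a)" "I 0"] that by simp
      from H(3)[OF this, of "1/ ?k"] show ?thesis using \<open>?k \<noteq> 0\<close> by simp
    qed
    show "(if g \<noteq> 0 then g else f) \<in> ?Q"
      using H(5)[OF fg(1)] H(6)[OF H(4)[OF fg(1)], of "G 0"] by simp
    show "(if g \<noteq> 0 then g else f) \<noteq> 0" using fg(2) by (auto simp: vzero_def)
  qed
  show ?thesis
  proof safe
    fix a b assume "(a, b) \<in> Ups"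
    then obtain h where h: "a = [:0,1:] * h" by (auto simp: Ups_def)
    have "(0, h) \<in> W" "(0, b) \<in> W" using Q by auto
    hence "(a, 0) \<in> W" using H(6)[of "(0,h)" "G 0"] h by simp
    from H(2)[OF this \<open>(0, b) \<in> W\<close>] show "(a, b) \<in> W" by simp
  qed
qed

lemma Ups_unique:
  assumes "t \<noteq> 0" "\<mu> \<noteq> 0" "is_submod (Mact t \<mu> 0) W" "W \<noteq> {vzero}" "W \<noteq> UNIV"
  shows "W = Ups"
proof -
  have sub: "Ups \<subseteq> W" using Ups_sub assms by blast
  have H: "\<And>v w. v \<in> W \<Longrightarrow> w \<in> W \<Longrightarrow> vadd v w \<in> W"
    "\<And>c v. v \<in> W \<Longrightarrow> vsmult c v \<in> W"
    "\<And>f g. (f, g) \<in> W \<Longrightarrow> (f, 0) \<in> W"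
    using assms(3) unfolding is_submod_def by force+
  have "W \<subseteq> Ups"
  proof (rule ccontr)
    assume "\<not> W \<subseteq> Ups"
    then obtain f g where fg: "(f, g) \<in> W" "(f, g) \<notin> Ups" by auto
    define c where "c = coeff f 0"
    have c: "c \<noteq> 0" using fg(2) by (simp add: Ups_iff c_def)
    have "(f - [:c:], 0) \<in> W" using sub by (simp add: Ups_iff c_def subsetD)
    from H(1)[OF H(3)[OF fg(1)] H(2)[OF this, of "-1"]]
    have cW: "([:c:], 0) \<in> W" by simp
    have "(a, b) \<in> W" for a b
    proof -
      have "(a - [:coeff a 0:], b) \<in> W" using sub by (simp add: Ups_iff subsetD)
      from H(1)[OF H(2)[OF cW, of "coeff a 0 / c"] this]
      show ?thesis using c by simp
    qed
    hence "W = UNIV" by auto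
    thus False using assms by simp
  qed
  thus ?thesis using sub by blast
qed



lemma div_x[simp]: "pCons 0 p div [:0,1:] = (p :: complex poly)"
proof -
  have "pCons 0 p = [:0,1:] * p" by simp
  moreover have "[:0,1:] \<noteq> (0 :: complex poly)" by simp
  ultimately show ?thesis by (metis nonzero_mult_div_cancel_left)
qed

definition phi :: "vec \<Rightarrow> vec" where
  "phi v = (snd v, fst v div [:0,1:])"

lemma phi_act:
  assumes "v \<in> Ups"
  shows "phi (Mact t \<mu> 0 X v) = Mact (-t) \<mu> (1/2) X (phi v)"
proof -
  obtain h g where v: "v = ([:0,1:] * h, g)" using assms by (auto simp: Ups_def)
  have d: "([:0,1:] * p) div [:0,1:] = p" for p :: "complex poly" by simp
  show ?thesis
  proof (cases X)
    case (L m)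
    have "shift (of_int m) ([:0,1:] * h) = [:of_int m, 1:] * shift (of_int m) h"
      by (simp only: shift_mult shift_x)
    thus ?thesis using L v
      by (simp add: phi_def div_smult_left add.commute)
  next
    case (I k)
    thus ?thesis using v by (simp add: phi_def)
  next
    case (G n)
    have "shift (of_int n / 2) ([:0,1:] * h) = [:of_int n / 2, 1:] * shift (of_int n / 2) h"
      by (simp only: shift_mult shift_x)
    thus ?thesis using G v
      by (simp add: phi_def div_smult_left)
  qed
qed

lemma phi_iso: "iso_to_Pi (Mact t \<mu> 0) Ups (Mact (-t) \<mu> (1/2)) phi"
  unfolding iso_to_Pi_def
proof (intro conjI ballI allI impI)
  show "bij_betw phi Ups UNIV"
  proof (rule bij_betwI')
    fix x y assume "x \<in> Ups" "y \<in> Ups"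
    thus "(phi x = phi y) = (x = y)"
      by (cases x; cases y) (auto simp: phi_def Ups_def elim!: dvdE)
  next
    fix x show "phi x \<in> UNIV" by simp
  next
    fix y :: vec
    obtain a b where y: "y = (a, b)" by fastforce
    have "([:0,1:] * b, a) \<in> Ups" by (simp add: Ups_def)
    moreover have "y = phi ([:0,1:] * b, a)" using y by (simp add: phi_def)
    ultimately show "\<exists>x\<in>Ups. y = phi x" by blast
  qed
next
  fix v w assume "v \<in> Ups" "w \<in> Ups"
  thus "phi (vadd v w) = vadd (phi v) (phi w)"
    by (cases v; cases w) (auto simp: phi_def Ups_def vadd_def elim!: dvdE simp flip: distrib_left)
next
  fix c v assume "v \<in> Ups"
  thus "phi (vsmult c v) = vsmult c (phi v)"
    by (cases v) (auto simp: phi_def vsmult_def div_smult_left)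
next
  fix f :: "complex poly" show "fst (phi (f, 0)) = 0" by (simp add: phi_def)
next
  fix g :: "complex poly" show "snd (phi (0, g)) = 0" by (simp add: phi_def)
next
  fix X v assume "v \<in> Ups"
  thus "phi (Mact t \<mu> 0 X v) = Mact (- t) \<mu> (1 / 2) X (phi v)" by (rule phi_act)
qed

lemma Ups_simple:
  assumes "t \<noteq> 0" "\<mu> \<noteq> 0"
  shows "simple_on (Mact t \<mu> 0) Ups"
  unfolding simple_on_def
proof (intro conjI allI impI)
  show "is_submod (Mact t \<mu> 0) Ups" by (rule Ups_submod)
  have "(0, 1) \<in> Ups" "(0, 1) \<noteq> vzero" by (auto simp: Ups_def vzero_def)
  thus "Ups \<noteq> {vzero}" by auto
  fix W assume "W \<subseteq> Ups \<and> is_submod (Mact t \<mu> 0) W"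
  thus "W = {vzero} \<or> W = Ups" using Ups_sub[OF assms, of W] by blast
qed

theorem theorem2p5:
  fixes \<mu> \<alpha> t :: complex
  assumes "\<mu> \<noteq> 0" and "t = 1 \<or> t = -1"
  shows "(simple_mod (Mact t \<mu> \<alpha>) \<longleftrightarrow> \<alpha> \<noteq> 0)
    \<and> is_submod (Mact t \<mu> 0) Ups \<and> Ups \<noteq> {vzero} \<and> Ups \<noteq> UNIV
    \<and> (\<forall>W. is_submod (Mact t \<mu> 0) W \<and> W \<noteq> {vzero} \<and> W \<noteq> UNIV \<longrightarrow> W = Ups)
    \<and> (\<exists>v. v \<notin> Ups \<and> (\<forall>w. \<exists>c. vadd w (vsmult (- c) v) \<in> Ups))
    \<and> (\<forall>X w. Mact t \<mu> 0 X w \<in> Ups)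
    \<and> (\<exists>\<phi>. iso_to_Pi (Mact 1 \<mu> 0) Ups (Mact (-1) \<mu> (1/2)) \<phi>)
    \<and> (\<exists>\<phi>. iso_to_Pi (Mact (-1) \<mu> 0) Ups (Mact 1 \<mu> (1/2)) \<phi>)
    \<and> simple_on (Mact 1 \<mu> 0) Ups \<and> simple_on (Mact (-1) \<mu> 0) Ups"
proof -
  have t: "t \<noteq> 0" using assms(2) by auto
  have U1: "Ups \<noteq> {vzero}"
  proof -
    have "(0, 1) \<in> Ups" "(0, 1) \<noteq> vzero" by (auto simp: Ups_def vzero_def)
    thus ?thesis by auto
  qed
  have U2: "Ups \<noteq> UNIV"
  proof -
    have "(1, 0) \<notin> Ups" by (simp add: Ups_iff)
    thus ?thesis by auto
  qed
  have S: "simple_mod (Mact t \<mu> \<alpha>) \<longleftrightarrow> \<alpha> \<noteq> 0"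
  proof
    assume s: "simple_mod (Mact t \<mu> \<alpha>)"
    show "\<alpha> \<noteq> 0"
    proof
      assume "\<alpha> = 0"
      with s have "Ups = {vzero} \<or> Ups = UNIV"
        using Ups_submod[of t \<mu>] unfolding simple_mod_def simple_on_def by blast
      thus False using U1 U2 by blast
    qed
  next
    assume "\<alpha> \<noteq> 0" thus "simple_mod (Mact t \<mu> \<alpha>)" using simple_alpha t assms(1) by blast
  qed
  have Q: "\<exists>v. v \<notin> Ups \<and> (\<forall>w. \<exists>c. vadd w (vsmult (- c) v) \<in> Ups)"
  proof (intro exI conjI allI)
    show "(1, 0) \<notin> Ups" by (simp add: Ups_iff)
    fix w :: vec
    show "vadd w (vsmult (- coeff (fst w) 0) (1, 0)) \<in> Ups"
      by (cases w) (simp add: Ups_iff)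
  qed
  have I1: "iso_to_Pi (Mact 1 \<mu> 0) Ups (Mact (-1) \<mu> (1/2)) phi" using phi_iso[of 1 \<mu>] by simp
  have I2: "iso_to_Pi (Mact (-1) \<mu> 0) Ups (Mact 1 \<mu> (1/2)) phi" using phi_iso[of "-1" \<mu>] by simp
  have U0: "is_submod (Mact t \<mu> 0) Ups" by (rule Ups_submod)
  have U3: "\<forall>W. is_submod (Mact t \<mu> 0) W \<and> W \<noteq> {vzero} \<and> W \<noteq> UNIV \<longrightarrow> W = Ups"
    using Ups_unique[OF t assms(1)] by blast
  have M: "\<forall>X w. Mact t \<mu> 0 X w \<in> Ups" using Mact0_Ups by blast
  have E1: "\<exists>\<phi>. iso_to_Pi (Mact 1 \<mu> 0) Ups (Mact (-1) \<mu> (1/2)) \<phi>" using I1 by blast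
  have E2: "\<exists>\<phi>. iso_to_Pi (Mact (-1) \<mu> 0) Ups (Mact 1 \<mu> (1/2)) \<phi>" using I2 by blast
  have S1: "simple_on (Mact 1 \<mu> 0) Ups" using Ups_simple[of 1 \<mu>] assms(1) by simp
  have S2: "simple_on (Mact (-1) \<mu> 0) Ups" using Ups_simple[of "-1" \<mu>] assms(1) by simp
  show ?thesis by (intro conjI; fact)
qed

end
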